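(* Let $K$ be a Cantor set and let $G$ be a nonempty full subgraph of $\mathscr{C}(K)$ which is invariant under the action of $\mathrm{Homeo}(K)$ (given by $f(U\sqcup V)=f(U)\sqcup f(V)$). Then $G$, with its own graph metric, has diameter exactly $2$.
   Context: A cut of a Stone space $X$ (compact, Hausdorff, totally disconnected) is an unordered partition of $X$ into two disjoint clopen sets $U,V$, written $U\sqcup V$; it is non-peripheral if each of $U,V$ contains at least two points. Two cuts $U\sqcup V$, $U'\sqcup V'$ cross if all four sets $U\cap U'$, $U\cap V'$, $V\cap U'$, $V\cap V'$ are nonempty; otherwise they are compatible. The complex of cuts $\mathscr{C}(X)$ is the simplicial graph whose vertices are the non-peripheral cuts of $X$, with edges between distinct compatible cuts. A full subgraph is an induced subgraph on a subset of the vertices. *)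

theory Defs
  imports "HOL-Analysis.Analysis"
begin

definition cantor_space :: "(nat \<Rightarrow> bool) topology" where
  "cantor_space = product_topology (\<lambda>_. discrete_topology (UNIV :: bool set)) UNIV"

definition is_cantor_set :: "'a topology \<Rightarrow> bool" where
  "is_cantor_set X \<longleftrightarrow> X homeomorphic_space cantor_space"

definition is_cut :: "'a topology \<Rightarrow> 'a set set \<Rightarrow> bool" where
  "is_cut X c \<longleftrightarrow> (\<exists>U V. c = {U, V} \<and> openin X U \<and> closedin X U \<and> openin X V \<and> closedin X V
      \<and> U \<inter> V = {} \<and> U \<union> V = topspace X)"

definition nonperipheral_cut :: "'a topology \<Rightarrow> 'a set set \<Rightarrow> bool" where
  "nonperipheral_cut X c \<longleftrightarrow> (\<exists>U V. c = {U, V} \<and> openin X U \<and> closedin X U \<and> openin X V \<and> closedin X V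
      \<and> U \<inter> V = {} \<and> U \<union> V = topspace X
      \<and> (\<exists>a b. a \<noteq> b \<and> a \<in> U \<and> b \<in> U) \<and> (\<exists>a b. a \<noteq> b \<and> a \<in> V \<and> b \<in> V))"

definition cuts_cross :: "'a set set \<Rightarrow> 'a set set \<Rightarrow> bool" where
  "cuts_cross c c' \<longleftrightarrow> (\<forall>A\<in>c. \<forall>B\<in>c'. A \<inter> B \<noteq> {})"

definition cut_vertices :: "'a topology \<Rightarrow> 'a set set set" where
  "cut_vertices X = {c. nonperipheral_cut X c}"

definition cut_edge :: "'a set set \<Rightarrow> 'a set set \<Rightarrow> bool" where
  "cut_edge c c' \<longleftrightarrow> c \<noteq> c' \<and> \<not> cuts_cross c c'"

definition cut_action :: "('a \<Rightarrow> 'a) \<Rightarrow> 'a set set \<Rightarrow> 'a set set" where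
  "cut_action f c = (\<lambda>A. f ` A) ` c"

text \<open>Generic graph notions for the full subgraph induced on vertex set S by edge relation E.\<close>
definition is_walk :: "('v \<Rightarrow> 'v \<Rightarrow> bool) \<Rightarrow> 'v set \<Rightarrow> 'v list \<Rightarrow> bool" where
  "is_walk E S p \<longleftrightarrow> p \<noteq> [] \<and> set p \<subseteq> S \<and> (\<forall>i. Suc i < length p \<longrightarrow> E (p ! i) (p ! Suc i))"

text \<open>Graph distance in the induced subgraph (infinity if no walk exists).\<close>
definition graph_dist :: "('v \<Rightarrow> 'v \<Rightarrow> bool) \<Rightarrow> 'v set \<Rightarrow> 'v \<Rightarrow> 'v \<Rightarrow> enat" where
  "graph_dist E S x y = (INF p \<in> {p. is_walk E S p \<and> hd p = x \<and> last p = y}. enat (length p - 1))"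

definition graph_diameter :: "('v \<Rightarrow> 'v \<Rightarrow> bool) \<Rightarrow> 'v set \<Rightarrow> enat" where
  "graph_diameter E S = (SUP x \<in> S. SUP y \<in> S. graph_dist E S x y)"

end

theory Submission
  imports Defs
begin

lemma topspace_C[simp]: "topspace cantor_space = UNIV"
  by (simp add: cantor_space_def)

lemma compact_C: "compact_space cantor_space"
  by (simp add: cantor_space_def compact_space_product_topology compact_space_discrete_topology)

lemma fin_dep_continuous:
  assumes "\<And>x y. (\<And>i. i < N \<Longrightarrow> x i = y i) \<Longrightarrow> g x = g y"
  shows "continuous_map cantor_space (discrete_topology UNIV) g"
proof -
  have "openin cantor_space {x. g x \<in> A}" for A
    unfolding cantor_space_def openin_product_topology_alt
  proof (intro ballI)
    fix x assume x: "x \<in> {x. g x \<in> A}"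
    define U where "U = (\<lambda>i. if i < N then {x i} else (UNIV::bool set))"
    have "finite {i \<in> UNIV. U i \<noteq> topspace (discrete_topology UNIV)}"
    proof (rule finite_subset[of _ "{..<N}"])
      show "{i \<in> UNIV. U i \<noteq> topspace (discrete_topology UNIV)} \<subseteq> {..<N}"
      proof
        fix i assume "i \<in> {i \<in> UNIV. U i \<noteq> topspace (discrete_topology UNIV)}"
        then have "U i \<noteq> UNIV" by simp
        then show "i \<in> {..<N}" unfolding U_def by (cases "i < N") auto
      qed
    qed auto
    moreover have "Pi\<^sub>E UNIV U \<subseteq> {x. g x \<in> A}"
    proof
      fix y assume "y \<in> Pi\<^sub>E UNIV U"
      then have "\<And>i. i < N \<Longrightarrow> y i \<in> U i" by (auto simp: PiE_def Pi_def)
      then have "\<And>i. i < N \<Longrightarrow> x i = y i" by (auto simp: U_def)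
      then show "y \<in> {x. g x \<in> A}" using x assms[of x y] by auto
    qed
    moreover have "x \<in> Pi\<^sub>E UNIV U" by (auto simp: U_def)
    ultimately show "\<exists>U. finite {i \<in> UNIV. U i \<noteq> topspace (discrete_topology UNIV)} \<and>
          (\<forall>i\<in>UNIV. openin (discrete_topology UNIV) (U i)) \<and> x \<in> Pi\<^sub>E UNIV U \<and> Pi\<^sub>E UNIV U \<subseteq> {x. g x \<in> A}"
      by (intro exI[of _ U] conjI) auto
  qed
  then show ?thesis
    by (simp add: continuous_map_def)
qed

lemma fin_dep_clopen:
  assumes "\<And>x y. (\<And>i. i < N \<Longrightarrow> x i = y i) \<Longrightarrow> (x \<in> U \<longleftrightarrow> y \<in> U)"
  shows "openin cantor_space U" "closedin cantor_space U"
proof -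
  have c: "continuous_map cantor_space (discrete_topology UNIV) (\<lambda>x. x \<in> U)"
    by (rule fin_dep_continuous[of N], rule assms)
  have "openin cantor_space {x \<in> topspace cantor_space. (x \<in> U) \<in> {True}}"
    by (rule openin_continuous_map_preimage[OF c]) simp
  moreover have "{x \<in> topspace cantor_space. (x \<in> U) \<in> {True}} = U" by auto
  ultimately show "openin cantor_space U" by simp
  have "openin cantor_space {x \<in> topspace cantor_space. (x \<in> U) \<in> {False}}"
    by (rule openin_continuous_map_preimage[OF c]) simp
  moreover have "{x \<in> topspace cantor_space. (x \<in> U) \<in> {False}} = topspace cantor_space - U" by auto
  ultimately show "closedin cantor_space U" by (simp add: closedin_def)
qed

lemma open_nbhd_N:
  assumes "openin cantor_space U" "x \<in> U"
  shows "\<exists>N. \<forall>y. (\<forall>i<N. y i = x i) \<longrightarrow> y \<in> U"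
proof -
  obtain V where V: "finite {i \<in> UNIV. V i \<noteq> topspace (discrete_topology (UNIV::bool set))}"
    "x \<in> Pi\<^sub>E UNIV V" "Pi\<^sub>E UNIV V \<subseteq> U"
    using assms unfolding cantor_space_def openin_product_topology_alt by blast
  define F where "F = {i \<in> UNIV. V i \<noteq> topspace (discrete_topology (UNIV::bool set))}"
  have fF: "finite F" using V(1) by (simp add: F_def)
  define N where "N = Suc (Max (insert 0 F))"
  have iN: "i \<in> F \<Longrightarrow> i < N" for i
    using fF by (simp add: N_def le_imp_less_Suc)
  show ?thesis
  proof (intro exI allI impI)
    fix y assume y: "\<forall>i<N. y i = x i"
    have "y \<in> Pi\<^sub>E UNIV V"
    proof (simp add: PiE_def Pi_def, intro allI)
      fix i show "y i \<in> V i"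
      proof (cases "i \<in> F")
        case True then show ?thesis using iN y V(2) by auto
      next
        case False then show ?thesis by (simp add: F_def)
      qed
    qed
    then show "y \<in> U" using V(3) by blast
  qed
qed

lemma clopen_fin_dep:
  assumes "openin cantor_space U" "closedin cantor_space U"
  shows "\<exists>N. \<forall>x y. (\<forall>i<N. x i = y i) \<longrightarrow> (x \<in> U \<longleftrightarrow> y \<in> U)"
proof -
  have oc: "openin cantor_space (- U)" using assms(2) by (simp add: closedin_def Compl_eq_Diff_UNIV)
  have "\<forall>x. \<exists>N. (\<forall>y. (\<forall>i<N. y i = x i) \<longrightarrow> (y \<in> U \<longleftrightarrow> x \<in> U))"
  proof
    fix x show "\<exists>N. (\<forall>y. (\<forall>i<N. y i = x i) \<longrightarrow> (y \<in> U \<longleftrightarrow> x \<in> U))"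
    proof (cases "x \<in> U")
      case True then show ?thesis using open_nbhd_N[OF assms(1) True] by blast
    next
      case False then show ?thesis using open_nbhd_N[OF oc, of x] by auto
    qed
  qed
  then obtain Nf where Nf0: "\<forall>x. (\<forall>y. (\<forall>i<Nf x. y i = x i) \<longrightarrow> (y \<in> U \<longleftrightarrow> x \<in> U))"
    by (rule choice[THEN exE]) 
  then have Nf: "\<And>x y. (\<forall>i<Nf x. y i = x i) \<Longrightarrow> (y \<in> U \<longleftrightarrow> x \<in> U)" by blast
  define cyl where "cyl x = {y. \<forall>i<Nf x. y i = x i}" for x
  have ocyl: "openin cantor_space (cyl x)" for x
    unfolding cyl_def by (rule fin_dep_clopen(1)[of "Nf x"]) auto
  have cp: "\<forall>\<U>. (\<forall>B\<in>\<U>. openin cantor_space B) \<and> UNIV \<subseteq> \<Union>\<U> \<longrightarrow> (\<exists>\<F>. finite \<F> \<and> \<F> \<subseteq> \<U> \<and> UNIV \<subseteq> \<Union>\<F>)"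
    using compact_C unfolding compact_space_def compactin_def by simp
  have cov: "(\<forall>B\<in>range cyl. openin cantor_space B) \<and> UNIV \<subseteq> \<Union>(range cyl)"
    using ocyl by (auto simp: cyl_def)
  obtain \<F> where F: "finite \<F>" "\<F> \<subseteq> range cyl" "UNIV \<subseteq> \<Union>\<F>"
    using mp[OF spec[OF cp, of "range cyl"] cov] by blast
  then obtain C where C: "finite C" "\<F> = cyl ` C"
    by (meson finite_subset_image subset_UNIV)
  define N where "N = Max (insert 0 (Nf ` C))"
  have NN: "c \<in> C \<Longrightarrow> Nf c \<le> N" for c using C by (simp add: N_def)
  show ?thesis
  proof (intro exI allI impI)
    fix x y :: "nat \<Rightarrow> bool" assume xy: "\<forall>i<N. x i = y i"
    obtain c where c: "c \<in> C" "x \<in> cyl c" using F(3) C(2) by auto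
    have "y \<in> cyl c" using c xy NN[OF c(1)] by (auto simp: cyl_def)
    then show "x \<in> U \<longleftrightarrow> y \<in> U" using c Nf unfolding cyl_def by blast
  qed
qed

definition isprefix :: "bool list \<Rightarrow> (nat \<Rightarrow> bool) \<Rightarrow> bool" where
  "isprefix w x \<longleftrightarrow> (\<forall>k<length w. x k = w!k)"
definition pcat :: "bool list \<Rightarrow> (nat \<Rightarrow> bool) \<Rightarrow> (nat \<Rightarrow> bool)" where
  "pcat w x = (\<lambda>k. if k < length w then w!k else x (k - length w))"
definition shft :: "nat \<Rightarrow> (nat \<Rightarrow> bool) \<Rightarrow> (nat \<Rightarrow> bool)" where
  "shft n x = (\<lambda>k. x (k+n))"
definition complete :: "bool list list \<Rightarrow> bool" where
  "complete P \<longleftrightarrow> (\<forall>x. \<exists>!i. i < length P \<and> isprefix (P!i) x)"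
definition idx :: "bool list list \<Rightarrow> (nat \<Rightarrow> bool) \<Rightarrow> nat" where
  "idx P x = (THE i. i < length P \<and> isprefix (P!i) x)"
definition pc :: "bool list list \<Rightarrow> bool list list \<Rightarrow> (nat \<Rightarrow> bool) \<Rightarrow> (nat \<Rightarrow> bool)" where
  "pc P Q x = pcat (Q ! idx P x) (shft (length (P ! idx P x)) x)"

lemma idx_prop: "complete P \<Longrightarrow> idx P x < length P \<and> isprefix (P ! idx P x) x"
  unfolding complete_def idx_def by (rule theI') blast

lemma idx_eq: "complete P \<Longrightarrow> i < length P \<Longrightarrow> isprefix (P!i) x \<Longrightarrow> idx P x = i"
  unfolding complete_def idx_def by (rule the1_equality) auto

lemma isprefix_pcat: "isprefix w (pcat w z)"
  by (simp add: isprefix_def pcat_def)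

lemma shft_pcat: "shft (length w) (pcat w z) = z"
  by (simp add: shft_def pcat_def)

lemma pcat_shft: "isprefix w x \<Longrightarrow> pcat w (shft (length w) x) = x"
  by (auto simp: isprefix_def pcat_def shft_def fun_eq_iff)

lemma pc_prefix: "complete P \<Longrightarrow> isprefix (Q ! idx P x) (pc P Q x)"
  by (simp add: pc_def isprefix_pcat)

lemma idx_pc: "complete P \<Longrightarrow> complete Q \<Longrightarrow> length P = length Q \<Longrightarrow> idx Q (pc P Q x) = idx P x"
  using idx_prop[of P x] by (intro idx_eq) (auto simp: pc_prefix)

lemma pc_inv: "complete P \<Longrightarrow> complete Q \<Longrightarrow> length P = length Q \<Longrightarrow> pc Q P (pc P Q x) = x"
proof -
  assume a: "complete P" "complete Q" "length P = length Q"
  have i: "idx Q (pc P Q x) = idx P x" using idx_pc[OF a] .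
  show ?thesis
    unfolding pc_def[of Q P] i
    unfolding pc_def by (simp add: shft_pcat pcat_shft idx_prop[OF a(1)])
qed

lemma idx_dep:
  assumes "complete P" "\<forall>i<M. x i = y i" "\<forall>w\<in>set P. length w \<le> M"
  shows "idx P x = idx P y"
proof -
  have 1: "idx P x < length P" "isprefix (P ! idx P x) x" using idx_prop[OF assms(1)] by auto
  have "length (P ! idx P x) \<le> M" using assms(3) 1(1) by auto
  then have "isprefix (P ! idx P x) y" using 1(2) assms(2) by (auto simp: isprefix_def)
  then show ?thesis using idx_eq[OF assms(1) 1(1)] by simp
qed

lemma pc_cont:
  assumes "complete P"
  shows "continuous_map cantor_space cantor_space (pc P Q)"
  unfolding cantor_space_def continuous_map_componentwise_UNIV
proof
  fix j
  define M where "M = sum_list (map length P)"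
  have Mb: "\<forall>w\<in>set P. length w \<le> M" unfolding M_def
    by (simp add: member_le_sum_list)
  show "continuous_map (product_topology (\<lambda>_. discrete_topology UNIV) UNIV) (discrete_topology UNIV) (\<lambda>x. pc P Q x j)"
    unfolding cantor_space_def[symmetric]
  proof (rule fin_dep_continuous[of "M + j + 1"])
    fix x y :: "nat \<Rightarrow> bool" assume xy: "\<And>i. i < M + j + 1 \<Longrightarrow> x i = y i"
    have ie: "idx P x = idx P y" using idx_dep[OF assms, of M x y] xy Mb by auto
    define i where "i = idx P x"
    have il: "i < length P" using idx_prop[OF assms] by (simp add: i_def)
    have "length (P!i) \<le> M" using Mb il by auto
    then show "pc P Q x j = pc P Q y j"
      unfolding pc_def ie[symmetric] i_def[symmetric]
      using xy by (auto simp: pcat_def shft_def)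
  qed
qed

lemma pc_homeo:
  assumes "complete P" "complete Q" "length P = length Q"
  shows "homeomorphic_maps cantor_space cantor_space (pc P Q) (pc Q P)"
  unfolding homeomorphic_maps_def
  using pc_cont[OF assms(1)] pc_cont[OF assms(2)] pc_inv[OF assms] pc_inv[OF assms(2,1) assms(3)[symmetric]]
  by auto

lemma isprefix_Cons: "isprefix (b # w) x \<longleftrightarrow> x 0 = b \<and> isprefix w (shft 1 x)"
  by (auto simp: isprefix_def shft_def less_Suc_eq_0_disj)

lemma complete_join:
  assumes A: "complete A" and B: "complete B"
  shows "complete (map (Cons True) A @ map (Cons False) B)" (is "complete ?J")
  unfolding complete_def
proof
  fix x
  show "\<exists>!i. i < length ?J \<and> isprefix (?J ! i) x"
  proof (cases "x 0")
    case True
    define i where "i = idx A (shft 1 x)"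
    have i: "i < length A" "isprefix (A!i) (shft 1 x)" using idx_prop[OF A] i_def by auto
    show ?thesis
    proof (rule ex1I[of _ i])
      show "i < length ?J \<and> isprefix (?J ! i) x" using i True by (simp add: nth_append isprefix_Cons)
    next
      fix j assume j: "j < length ?J \<and> isprefix (?J ! j) x"
      show "j = i"
      proof (cases "j < length A")
        case True
        then have "isprefix (A!j) (shft 1 x)" using j by (simp add: nth_append isprefix_Cons)
        then show ?thesis using idx_eq[OF A True] i_def by simp
      next
        case False
        have "j < length A + length B" using j by simp
        then have "j - length A < length B" using False by linarith
        then show ?thesis using j False \<open>x 0\<close> by (simp add: nth_append isprefix_Cons)
      qed
    qed
  next
    case False
    define i where "i = idx B (shft 1 x)"
    have i: "i < length B" "isprefix (B!i) (shft 1 x)" using idx_prop[OF B] i_def by auto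
    show ?thesis
    proof (rule ex1I[of _ "length A + i"])
      show "length A + i < length ?J \<and> isprefix (?J ! (length A + i)) x" using i False by (simp add: nth_append isprefix_Cons)
    next
      fix j assume j: "j < length ?J \<and> isprefix (?J ! j) x"
      show "j = length A + i"
      proof (cases "j < length A")
        case True
        then show ?thesis using j \<open>\<not> x 0\<close> by (simp add: nth_append isprefix_Cons)
      next
        case F: False
        then have "isprefix (B!(j - length A)) (shft 1 x)" "j - length A < length B" using j by (auto simp: nth_append isprefix_Cons)
        then have "j - length A = i" using idx_eq[OF B] i_def by simp
        then show ?thesis using F by simp
      qed
    qed
  qed
qed

fun codeS :: "nat \<Rightarrow> bool list list" where
  "codeS 0 = [[]]"
| "codeS (Suc k) = map (Cons True) [[]] @ map (Cons False) (codeS k)"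

lemma length_codeS: "length (codeS k) = Suc k"
  by (induct k) auto

lemma complete_codeS: "complete (codeS k)"
proof (induct k)
  case 0
  show ?case by (auto simp: complete_def isprefix_def)
next
  case (Suc k)
  have "complete [[]]" by (auto simp: complete_def isprefix_def)
  then have "complete (map (Cons True) [[]] @ map (Cons False) (codeS k))"
    by (rule complete_join[OF _ Suc])
  then show ?case by (simp only: codeS.simps)
qed


definition pre :: "nat \<Rightarrow> (nat \<Rightarrow> bool) \<Rightarrow> bool list" where
  "pre n x = map x [0..<n]"

lemma isprefix_len_iff: "length w = n \<Longrightarrow> isprefix w x \<longleftrightarrow> w = pre n x"
  by (auto simp: isprefix_def pre_def list_eq_iff_nth_eq)

lemma std_code:
  assumes dep: "\<forall>x y. (\<forall>i<N. x i = y i) \<longrightarrow> (x \<in> U \<longleftrightarrow> y \<in> U)"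
    and ne: "u \<in> U" "v \<notin> U"
  shows "\<exists>P Q. complete P \<and> complete Q \<and> length P = length Q \<and> (\<forall>x. x \<in> U \<longleftrightarrow> pc P Q x 0)"
proof -
  define W where "W = List.n_lists N [True, False]"
  define s where "s w \<longleftrightarrow> pcat w (\<lambda>_. False) \<in> U" for w
  have setW: "set W = {w. length w = N}" by (auto simp: W_def set_n_lists)
  have dW: "distinct W" unfolding W_def by (rule distinct_n_lists) simp
  have sU: "x \<in> U \<longleftrightarrow> s (pre N x)" for x
  proof -
    have "\<forall>i<N. x i = pcat (pre N x) (\<lambda>_. False) i" by (simp add: pcat_def pre_def)
    then show ?thesis using dep unfolding s_def by blast
  qed
  define LS where "LS = filter s W"
  define LV where "LV = filter (\<lambda>w. \<not> s w) W"
  define P where "P = LS @ LV"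
  have lenP: "\<forall>w\<in>set P. length w = N" using setW by (auto simp: P_def LS_def LV_def)
  have setP: "set P = set W" by (auto simp: P_def LS_def LV_def)
  have dP: "distinct P" using dW by (auto simp: P_def LS_def LV_def distinct_filter)
  have cP: "complete P"
    unfolding complete_def
  proof
    fix x
    have "pre N x \<in> set P" using setW setP by (simp add: pre_def)
    then obtain i where i: "i < length P" "P!i = pre N x" by (meson in_set_conv_nth)
    show "\<exists>!i. i < length P \<and> isprefix (P ! i) x"
    proof (rule ex1I[of _ i])
      show "i < length P \<and> isprefix (P ! i) x" using i lenP isprefix_len_iff by (simp add: pre_def)
    next
      fix j assume j: "j < length P \<and> isprefix (P ! j) x"
      then have "P!j = pre N x" using lenP isprefix_len_iff nth_mem by blast
      then show "j = i" using i j dP nth_eq_iff_index_eq by metis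
    qed
  qed
  define a where "a = length LS"
  define b where "b = length LV"
  have a0: "a > 0"
  proof -
    have "pre N u \<in> set LS" using ne(1) sU setW by (auto simp: LS_def pre_def)
    then show ?thesis by (auto simp: a_def)
  qed
  have b0: "b > 0"
  proof -
    have "pre N v \<in> set LV" using ne(2) sU setW by (auto simp: LV_def pre_def)
    then show ?thesis by (auto simp: b_def)
  qed
  define Q where "Q = map (Cons True) (codeS (a - 1)) @ map (Cons False) (codeS (b - 1))"
  have cQ: "complete Q" unfolding Q_def by (rule complete_join[OF complete_codeS complete_codeS])
  have lQ: "length Q = length P" using a0 b0 by (simp add: Q_def length_codeS P_def a_def b_def)
  have Q0: "i < length Q \<Longrightarrow> Q ! i \<noteq> [] \<and> (Q ! i) ! 0 = (i < a)" for i
    using a0 b0 by (auto simp: Q_def nth_append length_codeS)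
  have Ps: "i < length P \<Longrightarrow> s (P ! i) \<longleftrightarrow> i < a" for i
  proof -
    assume il: "i < length P"
    show ?thesis
    proof (cases "i < a")
      case True
      then have "P ! i \<in> set LS" by (simp add: P_def nth_append a_def)
      then show ?thesis using True by (simp add: LS_def)
    next
      case False
      then have "P ! i = LV ! (i - a)" "i - a < length LV" using il by (auto simp: P_def nth_append a_def)
      then have "P ! i \<in> set LV" by simp
      then show ?thesis using False by (simp add: LV_def)
    qed
  qed
  have "x \<in> U \<longleftrightarrow> pc P Q x 0" for x
  proof -
    define i where "i = idx P x"
    have i: "i < length P" "isprefix (P!i) x" using idx_prop[OF cP] by (auto simp: i_def)
    have "P!i = pre N x" using i lenP isprefix_len_iff nth_mem by blast
    then have "x \<in> U \<longleftrightarrow> i < a" using sU Ps[OF i(1)] by simp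
    moreover have "pc P Q x 0 = (Q ! i) ! 0" using Q0[of i] i lQ
      by (simp add: pc_def pcat_def i_def)
    ultimately show ?thesis using Q0[of i] i lQ by simp
  qed
  then show ?thesis using cP cQ lQ by (intro exI[of _ P] exI[of _ Q]) simp
qed

definition c0 :: "(nat \<Rightarrow> bool) set set" where "c0 = {{y. y 0}, {y. \<not> y 0}}"

lemma image_bij_eq: "(\<And>x. g (f x) = x) \<Longrightarrow> (\<And>y. f (g y) = y) \<Longrightarrow> f ` A = {y. g y \<in> A}"
  by (auto simp: image_iff) (metis)

lemma cut_to_std:
  assumes "nonperipheral_cut cantor_space c"
  shows "\<exists>f g. homeomorphic_map cantor_space cantor_space f \<and> homeomorphic_map cantor_space cantor_space g
     \<and> cut_action f c = c0 \<and> cut_action g c0 = c"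
proof -
  obtain U V where UV: "c = {U, V}" "openin cantor_space U" "closedin cantor_space U" "U \<inter> V = {}" "U \<union> V = UNIV"
    "\<exists>a b. a \<noteq> b \<and> a \<in> U \<and> b \<in> U" "\<exists>a b. a \<noteq> b \<and> a \<in> V \<and> b \<in> V"
    using assms unfolding nonperipheral_cut_def by auto
  have V: "V = - U" using UV(4,5) by auto
  obtain u v where uv: "u \<in> U" "v \<notin> U" using UV(6,7) V by auto
  obtain N where N: "\<forall>x y. (\<forall>i<N. x i = y i) \<longrightarrow> (x \<in> U \<longleftrightarrow> y \<in> U)"
    using clopen_fin_dep[OF UV(2,3)] by blast
  obtain P Q where PQ: "complete P" "complete Q" "length P = length Q" "\<forall>x. x \<in> U \<longleftrightarrow> pc P Q x 0"
    using std_code[OF N uv] by blast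
  have hm: "homeomorphic_maps cantor_space cantor_space (pc P Q) (pc Q P)" by (rule pc_homeo[OF PQ(1-3)])
  have i1: "\<And>x. pc Q P (pc P Q x) = x" by (rule pc_inv[OF PQ(1-3)])
  have i2: "\<And>x. pc P Q (pc Q P x) = x" by (rule pc_inv[OF PQ(2,1) PQ(3)[symmetric]])
  have e1: "pc P Q ` U = {y. y 0}" using image_bij_eq[of "pc Q P" "pc P Q", OF i1 i2] PQ(4) i2 by auto
  have e2: "pc P Q ` V = {y. \<not> y 0}" using image_bij_eq[of "pc Q P" "pc P Q", OF i1 i2] PQ(4) i2 V by auto
  have e3: "pc Q P ` {y. y 0} = U" using image_bij_eq[of "pc P Q" "pc Q P", OF i2 i1] PQ(4) by auto
  have e4: "pc Q P ` {y. \<not> y 0} = V" using image_bij_eq[of "pc P Q" "pc Q P", OF i2 i1] PQ(4) V by auto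
  show ?thesis
    apply (rule exI[of _ "pc P Q"], rule exI[of _ "pc Q P"])
    using hm homeomorphic_maps_map[of cantor_space cantor_space "pc P Q" "pc Q P"]
    by (auto simp: cut_action_def UV(1) c0_def e1 e2 e3 e4)
qed


definition PP :: "'a topology \<Rightarrow> bool" where
  "PP X \<longleftrightarrow> (\<forall>c\<in>cut_vertices X. \<forall>d\<in>cut_vertices X. \<exists>f. homeomorphic_map X X f \<and> cut_action f c = d)
    \<and> (\<exists>c\<in>cut_vertices X. \<exists>d\<in>cut_vertices X. cuts_cross c d)
    \<and> (\<forall>c\<in>cut_vertices X. \<forall>d\<in>cut_vertices X. cuts_cross c d \<longrightarrow> (\<exists>e\<in>cut_vertices X. cut_edge c e \<and> cut_edge e d))"

lemma cut_action_comp: "cut_action (f \<circ> g) c = cut_action f (cut_action g c)"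
  by (simp add: cut_action_def image_image image_comp)

lemma two_bits: "\<exists>x::nat\<Rightarrow>bool. x 0 = a \<and> x 1 = b"
  by (rule exI[of _ "\<lambda>i. if i = 0 then a else b"]) simp

lemma cross01: "cuts_cross {{y. y 0}, {y. \<not> y 0}} {{y::nat\<Rightarrow>bool. y 1}, {y. \<not> y 1}}"
proof -
  have "{y::nat\<Rightarrow>bool. y 0 = a} \<inter> {y. y 1 = b} \<noteq> {}" for a b
    using two_bits[of a b] by blast
  from this[of True True] this[of True False] this[of False True] this[of False False]
  show ?thesis unfolding cuts_cross_def by simp
qed

lemma bitset_clopen:
  "openin cantor_space {y. y k = p}" "closedin cantor_space {y. y k = p}"
  by (rule fin_dep_clopen[of "Suc k"]; simp)+

lemma bit_cut: "nonperipheral_cut cantor_space {{y. y k}, {y. \<not> y k}}"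
proof -
  have o: "openin cantor_space {y. y k}" "closedin cantor_space {y. y k}"
      "openin cantor_space {y. \<not> y k}" "closedin cantor_space {y. \<not> y k}"
    using bitset_clopen[of k True] bitset_clopen[of k False] by simp_all
  have t: "\<exists>a b. a \<noteq> b \<and> a \<in> {y::nat\<Rightarrow>bool. y k = p} \<and> b \<in> {y. y k = p}" for p :: bool
  proof (intro exI conjI)
    show "(\<lambda>i. if i = k then p else True) \<noteq> (\<lambda>i. if i = k then p else False)"
      by (auto simp: fun_eq_iff intro: exI[of _ "Suc k"])
  qed simp_all
  show ?thesis unfolding nonperipheral_cut_def
    apply (rule exI[of _ "{y. y k}"], rule exI[of _ "{y. \<not> y k}"])
    using o t[of True] t[of False] by auto
qed

lemma PP_cantor: "PP cantor_space"
  unfolding PP_def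
proof (intro conjI ballI impI)
  fix c d assume c: "c \<in> cut_vertices cantor_space" and d: "d \<in> cut_vertices cantor_space"
  obtain f where f: "homeomorphic_map cantor_space cantor_space f" "cut_action f c = c0"
    using cut_to_std c by (auto simp: cut_vertices_def)
  obtain g where g: "homeomorphic_map cantor_space cantor_space g" "cut_action g c0 = d"
    using cut_to_std d by (auto simp: cut_vertices_def)
  show "\<exists>f. homeomorphic_map cantor_space cantor_space f \<and> cut_action f c = d"
    using homeomorphic_map_compose[OF f(1) g(1)] f(2) g(2) by (auto simp: cut_action_comp)
next
  show "\<exists>c\<in>cut_vertices cantor_space. \<exists>d\<in>cut_vertices cantor_space. cuts_cross c d"
    using bit_cut[of 0] bit_cut[of 1] cross01 unfolding cut_vertices_def by blast
next
  fix c d assume c: "c \<in> cut_vertices cantor_space" and d: "d \<in> cut_vertices cantor_space"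
    and cr: "cuts_cross c d"
  obtain U V where UV: "c = {U, V}" "openin cantor_space U" "closedin cantor_space U" "U \<inter> V = {}" "U \<union> V = UNIV"
    using c unfolding cut_vertices_def nonperipheral_cut_def by auto
  obtain U' V' where UV': "d = {U', V'}" "openin cantor_space U'" "closedin cantor_space U'" "U' \<inter> V' = {}" "U' \<union> V' = UNIV"
    using d unfolding cut_vertices_def nonperipheral_cut_def by auto
  have V: "V = - U" "V' = - U'" using UV UV' by auto
  obtain x where x: "x \<in> U" "x \<in> U'" using cr UV(1) UV'(1) by (auto simp: cuts_cross_def)
  obtain N1 where N1: "\<forall>x y. (\<forall>i<N1. x i = y i) \<longrightarrow> (x \<in> U \<longleftrightarrow> y \<in> U)"
    using clopen_fin_dep[OF UV(2,3)] by blast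
  obtain N2 where N2: "\<forall>x y. (\<forall>i<N2. x i = y i) \<longrightarrow> (x \<in> U' \<longleftrightarrow> y \<in> U')"
    using clopen_fin_dep[OF UV'(2,3)] by blast
  define n where "n = N1 + N2"
  define W where "W = {y. \<forall>i\<le>n. y i = x i}"
  have WU: "W \<subseteq> U" "W \<subseteq> U'"
  proof -
    show "W \<subseteq> U"
    proof
      fix y assume "y \<in> W"
      then have "\<forall>i<N1. x i = y i" by (auto simp: W_def n_def)
      then show "y \<in> U" using N1 x(1) by blast
    qed
    show "W \<subseteq> U'"
    proof
      fix y assume "y \<in> W"
      then have "\<forall>i<N2. x i = y i" by (auto simp: W_def n_def)
      then show "y \<in> U'" using N2 x(2) by blast
    qed
  qed
  define x' where "x' = x(n := \<not> x n)"
  have x'U: "x' \<in> U" "x' \<in> U'" "x' \<notin> W"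
  proof -
    have "\<forall>i<N1. x i = x' i" by (auto simp: x'_def n_def)
    then show "x' \<in> U" using N1 x(1) by blast
    have "\<forall>i<N2. x i = x' i" by (auto simp: x'_def n_def)
    then show "x' \<in> U'" using N2 x(2) by blast
    show "x' \<notin> W" by (auto simp: x'_def W_def)
  qed
  have xW: "x \<in> W" by (simp add: W_def)
  have Wc: "openin cantor_space W" "closedin cantor_space W"
    by (rule fin_dep_clopen[of "Suc n"]; auto simp: W_def)+
  have Wc': "openin cantor_space (- W)" "closedin cantor_space (- W)"
    by (rule fin_dep_clopen[of "Suc n"]; auto simp: W_def)+
  define e where "e = {W, - W}"
  have t1: "\<exists>a b. a \<noteq> b \<and> a \<in> W \<and> b \<in> W"
    by (rule exI[of _ x], rule exI[of _ "x(Suc n := \<not> x (Suc n))"])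
       (auto simp: W_def fun_eq_iff)
  have t2: "\<exists>a b. a \<noteq> b \<and> a \<in> - W \<and> b \<in> - W"
    using x'U(3)
    by (intro exI[of _ x'] exI[of _ "x'(Suc n := \<not> x' (Suc n))"])
       (auto simp: W_def x'_def fun_eq_iff)
  have eV: "e \<in> cut_vertices cantor_space"
    unfolding cut_vertices_def nonperipheral_cut_def e_def
    apply (rule CollectI, rule exI[of _ W], rule exI[of _ "- W"])
    using t1 t2 Wc Wc' by auto
  have "cut_edge c e"
    unfolding cut_edge_def cuts_cross_def
  proof
    show "c \<noteq> e"
    proof
      assume "c = e"
      then have "W = U \<or> W = V" using UV(1) e_def by (auto simp: doubleton_eq_iff)
      then show False using x'U xW x(1) V by auto
    qed
    show "\<not> (\<forall>A\<in>c. \<forall>B\<in>e. A \<inter> B \<noteq> {})"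
      using WU V UV(1) e_def by auto
  qed
  moreover have "cut_edge e d"
    unfolding cut_edge_def cuts_cross_def
  proof
    show "e \<noteq> d"
    proof
      assume "e = d"
      then have "W = U' \<or> W = V'" using UV'(1) e_def by (auto simp: doubleton_eq_iff)
      then show False using x'U xW x(2) V by auto
    qed
    show "\<not> (\<forall>A\<in>e. \<forall>B\<in>d. A \<inter> B \<noteq> {})"
      using WU V UV'(1) e_def by auto
  qed
  ultimately show "\<exists>e\<in>cut_vertices cantor_space. cut_edge c e \<and> cut_edge e d" using eV by blast
qed


definition img :: "('a \<Rightarrow> 'b) \<Rightarrow> 'a set set \<Rightarrow> 'b set set" where
  "img f c = (\<lambda>A. f ` A) ` c"

lemma cut_action_img: "cut_action f c = img f c"
  by (simp add: cut_action_def img_def)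

lemma img_comp: "img (f \<circ> g) c = img f (img g c)"
  by (simp add: img_def image_image image_comp)

lemma hm_cut:
  assumes hm: "homeomorphic_maps X Y h k" and c: "nonperipheral_cut X c"
  shows "nonperipheral_cut Y (img h c)" "img k (img h c) = c"
    "\<forall>A\<in>c. A \<subseteq> topspace X"
proof -
  have h: "homeomorphic_map X Y h" using hm homeomorphic_maps_map by blast
  have kh: "\<And>x. x \<in> topspace X \<Longrightarrow> k (h x) = x" using hm by (auto simp: homeomorphic_maps_def)
  have inj: "inj_on h (topspace X)" using homeomorphic_imp_injective_map[OF h] .
  have sur: "h ` topspace X = topspace Y" using homeomorphic_imp_surjective_map[OF h] .
  obtain U V where UV: "c = {U, V}" "openin X U" "closedin X U" "openin X V" "closedin X V"
      "U \<inter> V = {}" "U \<union> V = topspace X" "\<exists>a b. a \<noteq> b \<and> a \<in> U \<and> b \<in> U" "\<exists>a b. a \<noteq> b \<and> a \<in> V \<and> b \<in> V"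
    using c unfolding nonperipheral_cut_def by blast
  have sub: "U \<subseteq> topspace X" "V \<subseteq> topspace X" using UV(7) by auto
  show "\<forall>A\<in>c. A \<subseteq> topspace X" using sub UV(1) by auto
  have two: "\<exists>a b. a \<noteq> b \<and> a \<in> h ` S \<and> b \<in> h ` S"
    if S1: "S \<subseteq> topspace X" and S2: "\<exists>a b. a \<noteq> b \<and> a \<in> S \<and> b \<in> S" for S
  proof -
    obtain a b where "a \<noteq> b" "a \<in> S" "b \<in> S" using S2 by blast
    then show ?thesis using inj S1 by (intro exI[of _ "h a"] exI[of _ "h b"]) (auto simp: inj_on_def)
  qed
  have d1: "h ` U \<inter> h ` V = {}" using inj_on_image_Int[OF inj sub] UV(6) by simp
  have d2: "h ` U \<union> h ` V = topspace Y" using UV(7) sur by (simp flip: image_Un)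
  have o1: "openin Y (h ` U)" "closedin Y (h ` U)" "openin Y (h ` V)" "closedin Y (h ` V)"
    using homeomorphic_map_openness[OF h sub(1)] homeomorphic_map_closedness[OF h sub(1)]
      homeomorphic_map_openness[OF h sub(2)] homeomorphic_map_closedness[OF h sub(2)] UV by simp_all
  have t1: "\<exists>a b. a \<noteq> b \<and> a \<in> h ` U \<and> b \<in> h ` U" by (rule two[OF sub(1) UV(8)])
  have t2: "\<exists>a b. a \<noteq> b \<and> a \<in> h ` V \<and> b \<in> h ` V" by (rule two[OF sub(2) UV(9)])
  have ic: "img h c = {h ` U, h ` V}" by (simp add: img_def UV(1))
  show "nonperipheral_cut Y (img h c)"
    unfolding nonperipheral_cut_def ic
    by (intro exI[of _ "h ` U"] exI[of _ "h ` V"] conjI refl o1 d1 d2 t1 t2)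
  have "k ` h ` U = U" "k ` h ` V = V" using kh sub by (force simp: image_image)+
  then show "img k (img h c) = c" by (simp add: img_def UV(1))
qed

lemma hm_cross:
  assumes hm: "homeomorphic_maps X Y h k" and c: "nonperipheral_cut X c" and d: "nonperipheral_cut X d"
  shows "cuts_cross (img h c) (img h d) \<longleftrightarrow> cuts_cross c d"
proof -
  have h: "homeomorphic_map X Y h" using hm homeomorphic_maps_map by blast
  have inj: "inj_on h (topspace X)" using homeomorphic_imp_injective_map[OF h] .
  have sc: "\<forall>A\<in>c. A \<subseteq> topspace X" "\<forall>A\<in>d. A \<subseteq> topspace X" using hm_cut(3)[OF hm c] hm_cut(3)[OF hm d] by auto
  have "h ` A \<inter> h ` B \<noteq> {} \<longleftrightarrow> A \<inter> B \<noteq> {}" if "A \<in> c" "B \<in> d" for A B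
    using inj_on_image_Int[OF inj, of A B] sc that by auto
  then show ?thesis unfolding cuts_cross_def img_def by auto
qed

lemma PP_transfer:
  assumes hm: "homeomorphic_maps X Y h k" and P: "PP X"
  shows "PP Y"
proof -
  have hm': "homeomorphic_maps Y X k h" using hm homeomorphic_maps_sym by blast
  have h: "homeomorphic_map X Y h" and k: "homeomorphic_map Y X k" using hm hm' homeomorphic_maps_map by blast+
  note PX = P[unfolded PP_def]
  have vk: "c \<in> cut_vertices Y \<Longrightarrow> img k c \<in> cut_vertices X" for c
    using hm_cut(1)[OF hm'] by (auto simp: cut_vertices_def)
  have vh: "c \<in> cut_vertices X \<Longrightarrow> img h c \<in> cut_vertices Y" for c
    using hm_cut(1)[OF hm] by (auto simp: cut_vertices_def)
  have hk: "c \<in> cut_vertices Y \<Longrightarrow> img h (img k c) = c" for c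
    using hm_cut(2)[OF hm'] by (auto simp: cut_vertices_def)
  have kh: "c \<in> cut_vertices X \<Longrightarrow> img k (img h c) = c" for c
    using hm_cut(2)[OF hm] by (auto simp: cut_vertices_def)
  have crh: "c \<in> cut_vertices X \<Longrightarrow> d \<in> cut_vertices X \<Longrightarrow> cuts_cross (img h c) (img h d) \<longleftrightarrow> cuts_cross c d" for c d
    using hm_cross[OF hm] by (auto simp: cut_vertices_def)
  have crk: "c \<in> cut_vertices Y \<Longrightarrow> d \<in> cut_vertices Y \<Longrightarrow> cuts_cross (img k c) (img k d) \<longleftrightarrow> cuts_cross c d" for c d
    using hm_cross[OF hm'] by (auto simp: cut_vertices_def)
  show ?thesis unfolding PP_def
  proof (intro conjI ballI impI)
    fix c d assume c: "c \<in> cut_vertices Y" and d: "d \<in> cut_vertices Y"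
    obtain f where f: "homeomorphic_map X X f" "cut_action f (img k c) = img k d"
      using PX vk[OF c] vk[OF d] by blast
    have "homeomorphic_map Y Y (h \<circ> (f \<circ> k))"
      by (rule homeomorphic_map_compose[OF homeomorphic_map_compose[OF k f(1)] h])
    moreover have "cut_action (h \<circ> (f \<circ> k)) c = d" using f(2) hk[OF d] by (simp add: cut_action_img img_comp)
    ultimately show "\<exists>f. homeomorphic_map Y Y f \<and> cut_action f c = d" by blast
  next
    obtain c d where cd: "c \<in> cut_vertices X" "d \<in> cut_vertices X" "cuts_cross c d" using PX by blast
    show "\<exists>c\<in>cut_vertices Y. \<exists>d\<in>cut_vertices Y. cuts_cross c d"
      using vh[OF cd(1)] vh[OF cd(2)] crh[OF cd(1,2)] cd(3) by blast
  next
    fix c d assume c: "c \<in> cut_vertices Y" and d: "d \<in> cut_vertices Y" and cr: "cuts_cross c d"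
    have "cuts_cross (img k c) (img k d)" using crk[OF c d] cr by simp
    then obtain e where e: "e \<in> cut_vertices X" "cut_edge (img k c) e" "cut_edge e (img k d)"
      using PX vk[OF c] vk[OF d] by blast
    have "cut_edge c (img h e)"
      unfolding cut_edge_def
    proof
      show "c \<noteq> img h e" using e(2) kh[OF e(1)] by (auto simp: cut_edge_def)
      show "\<not> cuts_cross c (img h e)"
        using crh[OF vk[OF c] e(1)] hk[OF c] e(2) by (auto simp: cut_edge_def)
    qed
    moreover have "cut_edge (img h e) d"
      unfolding cut_edge_def
    proof
      show "img h e \<noteq> d" using e(3) kh[OF e(1)] by (auto simp: cut_edge_def)
      show "\<not> cuts_cross (img h e) d"
        using crh[OF e(1) vk[OF d]] hk[OF d] e(3) by (auto simp: cut_edge_def)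
    qed
    ultimately show "\<exists>e\<in>cut_vertices Y. cut_edge c e \<and> cut_edge e d" using vh[OF e(1)] by blast
  qed
qed

lemma cross_irrefl: "c \<in> cut_vertices X \<Longrightarrow> \<not> cuts_cross c c"
  unfolding cut_vertices_def nonperipheral_cut_def cuts_cross_def by auto

lemma walk3: "x \<in> S \<Longrightarrow> e \<in> S \<Longrightarrow> y \<in> S \<Longrightarrow> E x e \<Longrightarrow> E e y \<Longrightarrow> is_walk E S [x, e, y]"
  unfolding is_walk_def
proof (intro conjI allI impI)
  fix i assume "x \<in> S" "e \<in> S" "y \<in> S" "E x e" "E e y" "Suc i < length [x, e, y]"
  then show "E ([x, e, y] ! i) ([x, e, y] ! Suc i)"
    by (cases i) (auto simp: less_Suc_eq)
qed auto

lemma diam_of_PP: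
  assumes P: "PP X"
  shows "graph_diameter cut_edge (cut_vertices X) = 2"
proof -
  let ?V = "cut_vertices X"
  note PX = P[unfolded PP_def]
  have le: "graph_dist cut_edge ?V x y \<le> 2" if x: "x \<in> ?V" and y: "y \<in> ?V" for x y
  proof -
    have "\<exists>p. is_walk cut_edge ?V p \<and> hd p = x \<and> last p = y \<and> length p \<le> 3"
    proof (cases "x = y")
      case True then show ?thesis using x by (intro exI[of _ "[x]"]) (auto simp: is_walk_def)
    next
      case False
      show ?thesis
      proof (cases "cuts_cross x y")
        case True
        then obtain e where "e \<in> ?V" "cut_edge x e" "cut_edge e y" using PX x y by blast
        then show ?thesis using x y walk3[of x ?V e y cut_edge] by (intro exI[of _ "[x, e, y]"]) auto
      next
        case F: False
        have "is_walk cut_edge ?V [x, y]" using x y False F by (auto simp: is_walk_def cut_edge_def)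
        then show ?thesis by (intro exI[of _ "[x, y]"]) auto
      qed
    qed
    then obtain p where p: "is_walk cut_edge ?V p" "hd p = x" "last p = y" "length p \<le> 3" by blast
    have "enat (length p - 1) \<le> 2" using p(4) by (simp add: numeral_eq_enat)
    then show ?thesis unfolding graph_dist_def using p by (intro INF_lower2[of p]) auto
  qed
  have ge: "2 \<le> graph_dist cut_edge ?V x y" if x: "x \<in> ?V" and y: "y \<in> ?V" and cr: "cuts_cross x y" for x y
    unfolding graph_dist_def
  proof (rule INF_greatest)
    fix p assume "p \<in> {p. is_walk cut_edge ?V p \<and> hd p = x \<and> last p = y}"
    then have p: "is_walk cut_edge ?V p" "hd p = x" "last p = y" by auto
    have "length p \<ge> 3"
    proof (rule ccontr)
      assume "\<not> length p \<ge> 3"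
      moreover have "length p \<noteq> 0" using p(1) by (auto simp: is_walk_def)
      ultimately have "length p = 1 \<or> length p = 2" by linarith
      then show False
      proof
        assume "length p = 1"
        then obtain a where "p = [a]" by (cases p) auto
        then show False using p cross_irrefl[OF x] cr by simp
      next
        assume "length p = 2"
        then obtain a b where ab: "p = [a, b]" by (cases p; cases "tl p") auto
        then have "cut_edge a b" using p(1) unfolding is_walk_def by (metis One_nat_def lessI nth_Cons_0 nth_Cons_Suc length_Cons list.size(3) numeral_2_eq_2)
        then show False using p ab cr by (simp add: cut_edge_def)
      qed
    qed
    then show "2 \<le> enat (length p - 1)" by (simp add: numeral_eq_enat)
  qed
  obtain c d where cd: "c \<in> ?V" "d \<in> ?V" "cuts_cross c d" using PX by blast
  have "graph_diameter cut_edge ?V \<le> 2"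
    unfolding graph_diameter_def using le by (intro SUP_least) auto
  moreover have "2 \<le> graph_diameter cut_edge ?V"
    unfolding graph_diameter_def
    using ge[OF cd] cd by (intro SUP_upper2[of c] SUP_upper2[of d]) auto
  ultimately show ?thesis by (rule antisym)
qed

theorem mainTheorem4:
  fixes K :: "'a topology" and G :: "'a set set set"
  assumes "is_cantor_set K"
    and "G \<subseteq> cut_vertices K"
    and "G \<noteq> {}"
    and "\<And>f c. homeomorphic_map K K f \<Longrightarrow> c \<in> G \<Longrightarrow> cut_action f c \<in> G"
  shows "graph_diameter cut_edge G = 2"
proof -
  obtain h k where "homeomorphic_maps K cantor_space h k"
    using assms(1) unfolding is_cantor_set_def homeomorphic_space_def by blast
  then have "homeomorphic_maps cantor_space K k h" using homeomorphic_maps_sym by blast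
  then have P: "PP K" using PP_transfer PP_cantor by blast
  have "G = cut_vertices K"
  proof
    show "cut_vertices K \<subseteq> G"
    proof
      fix d assume d: "d \<in> cut_vertices K"
      obtain c where c: "c \<in> G" using assms(3) by blast
      then obtain f where "homeomorphic_map K K f" "cut_action f c = d"
        using P d assms(2) unfolding PP_def by blast
      then show "d \<in> G" using assms(4) c by blast
    qed
  qed (rule assms(2))
  then show ?thesis using diam_of_PP[OF P] by simp
qed

end
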